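(* Let $(X,\mathcal{B},T,\mu)$ be a measure-preserving dynamical system with $\mu(X)=1$, let $(Y,\mathcal{C})$ be a measurable space, and let $\tilde{T}(x,y)=(T(x),\varphi_x(y))$ be a skew product on $X\times Y$ for a family of measurable maps $\varphi_x:Y\to Y$, with a $\tilde{T}$-invariant probability measure $\Theta$ on $X\times Y$ satisfying $\Pi_X^*(\Theta)=\mu$. Let $(\Theta_x)_{x\in X}$ be the disintegration of $\Theta$ with respect to $\mu$. Let $\Omega=\prod_{n\in\mathbb{N}}Y$ with the left shift $\sigma(y_1,y_2,\dots)=(y_2,y_3,\dots)$, let $\hat{T}(x,\omega)=(T(x),\sigma(\omega))$ on $X\times\Omega$, and let $\mathbb{Q}(dx,d\omega)=\mu(dx)\mathbb{Q}_x(d\omega)$ where $\mathbb{Q}_x=\prod_{k=1}^\infty\Theta_{T^{k-1}(x)}$. Let $h:X\times Y\to\mathbb{R}$ be measurable and assume: (1) for $\mu$-a.e. $x\in X$, $h(x,\cdot)$ is not $\Theta_x$-a.s. equal to a constant; (2) $h\in L^1(\Theta)$, $\int_{X\times Y}h\,d\Theta=0$, and $\mathbb{Q}$ is $\hat{T}$-ergodic. Then for $\mu$-a.e. $x\in X$ and for $\prod_{k=1}^\infty\Theta_{T^{k-1}(x)}$-a.e. $(y_k)_{k\in\mathbb{N}}\in\prod_{\mathbb{N}}Y$, \[\liminf_{n\to\infty}\sum_{k=1}^n h(T^{k-1}(x),y_k)=-\infty\quad\text{and}\quad\limsup_{n\to\infty}\sum_{k=1}^n h(T^{k-1}(x),y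_k)=+\infty.\]
   Context: The disintegration $(\Theta_x)$ of $\Theta$ with respect to $\mu$ is the family of probability measures on $Y$, defined for $\mu$-a.e. $x$, with $x\mapsto\Theta_x(C)$ measurable and $\int H\,d\Theta=\int_X\int_Y H(x,y)\,\Theta_x(dy)\,\mu(dx)$ for measurable $H\ge0$. $\Pi_X$ denotes the projection onto $X$. In this setting $\mathbb{Q}$ is a $\hat{T}$-invariant probability measure on $X\times\Omega$. *)

theory Defs
  imports "HOL-Probability.Probability"
begin

definition preserves :: "'a measure \<Rightarrow> ('a \<Rightarrow> 'a) \<Rightarrow> bool" where
  "preserves P f \<longleftrightarrow> f \<in> P \<rightarrow>\<^sub>M P \<and> distr P P f = P"

definition ergodic :: "'a measure \<Rightarrow> ('a \<Rightarrow> 'a) \<Rightarrow> bool" where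
  "ergodic P f \<longleftrightarrow> preserves P f \<and>
     (\<forall>A \<in> sets P. f -` A \<inter> space P = A \<longrightarrow> measure P A = 0 \<or> measure P A = 1)"

text \<open>Fibre measure Q_x = prod_k Theta_{T^k x} (0-indexed: coordinate k carries
  Theta_{T^k x}, i.e. y_{k+1} in the paper's 1-indexed notation).\<close>
definition fibre_measure :: "('a \<Rightarrow> 'a) \<Rightarrow> ('a \<Rightarrow> 'b measure) \<Rightarrow> 'a \<Rightarrow> (nat \<Rightarrow> 'b) measure" where
  "fibre_measure T K x = PiM UNIV (\<lambda>k. K ((T ^^ k) x))"

text \<open>Q(dx,d omega) = mu(dx) Q_x(d omega) on X \<times> Omega.\<close>
definition skew_measure :: "'a measure \<Rightarrow> 'b measure \<Rightarrow> ('a \<Rightarrow> 'a) \<Rightarrow> ('a \<Rightarrow> 'b measure)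
    \<Rightarrow> ('a \<times> (nat \<Rightarrow> 'b)) measure" where
  "skew_measure M N T K = M \<bind> (\<lambda>x. distr (fibre_measure T K x)
      (M \<Otimes>\<^sub>M PiM UNIV (\<lambda>_. N)) (\<lambda>\<omega>. (x, \<omega>)))"

definition shift_hat :: "('a \<Rightarrow> 'a) \<Rightarrow> 'a \<times> (nat \<Rightarrow> 'b) \<Rightarrow> 'a \<times> (nat \<Rightarrow> 'b)" where
  "shift_hat T = (\<lambda>(x, \<omega>). (T x, \<lambda>k. \<omega> (Suc k)))"

end

theory Submission
  imports Defs
begin

lemma clip_facts:
  fixes a b N :: real
  defines "u \<equiv> max (-N) (min N b) - max (-N) (min N a)"
  shows "max u 0 \<le> max (b - a) 0" "max (-u) 0 \<le> max (a - b) 0" "\<bar>u\<bar> \<le> \<bar>b - a\<bar>"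
  unfolding u_def max_def min_def by (simp_all split: if_split)

lemma clip_id: "\<bar>a\<bar> \<le> (N::real) \<Longrightarrow> max (-N) (min N a) = a"
  by (simp add: max_def min_def abs_real_def split: if_splits)

lemma clip_tendsto:
  fixes a b :: real
  shows "(\<lambda>n. max (- real n) (min (real n) b) - max (- real n) (min (real n) a)) \<longlonglongrightarrow> b - a"
proof -
  obtain n0 :: nat where "real n0 \<ge> \<bar>a\<bar> + \<bar>b\<bar>" using real_arch_simple by blast
  then have "\<forall>n\<ge>n0. max (- real n) (min (real n) b) - max (- real n) (min (real n) a) = b - a"
    by (intro allI impI, subst (1 2) clip_id) auto
  then show ?thesis
    by (intro tendsto_eventually) (auto simp: eventually_sequentially)
qed


lemma nn_fin_of_int:
  fixes f :: "'x \<Rightarrow> real"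
  assumes "integrable P f"
  shows "(\<integral>\<^sup>+z. ennreal (f z) \<partial>P) < \<infinity>"
proof -
  have "(\<integral>\<^sup>+z. ennreal (f z) \<partial>P) \<le> (\<integral>\<^sup>+z. ennreal (norm (f z)) \<partial>P)"
    by (intro nn_integral_mono ennreal_leI) simp
  also have "\<dots> < \<infinity>" using assms by (simp add: integrable_iff_bounded)
  finally show ?thesis .
qed

lemma coboundary_integral_zero:
  fixes P :: "'x measure" and S :: "'x \<Rightarrow> 'x" and g F :: "'x \<Rightarrow> real"
  assumes P: "prob_space P" and S: "preserves P S"
    and g[measurable]: "g \<in> borel_measurable P" and F: "integrable P F"
    and le: "AE z in P. g (S z) - g z \<le> F z"
  shows "integrable P (\<lambda>z. g (S z) - g z) \<and> (\<integral>z. g (S z) - g z \<partial>P) = 0"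
proof -
  interpret prob_space P by fact
  have S_meas[measurable]: "S \<in> P \<rightarrow>\<^sub>M P" and S_distr: "distr P P S = P"
    using S by (auto simp: preserves_def)
  define d where "d z = g (S z) - g z" for z
  define c where "c n a = max (- real n) (min (real n) a)" for n and a :: real
  define dn where "dn n z = c n (g (S z)) - c n (g z)" for n z
  have d_meas[measurable]: "d \<in> borel_measurable P" unfolding d_def by measurable
  have dn_meas[measurable]: "dn n \<in> borel_measurable P" for n unfolding dn_def c_def by measurable
  have dn_bound: "norm (dn n z) \<le> 2 * real n" for n z
    unfolding dn_def c_def by (simp add: max_def min_def abs_real_def split: if_splits)
  have dn_int: "integrable P (dn n)" for n
    by (rule integrable_const_bound[where B="2 * real n"]) (use dn_bound in auto)
  have cg_int: "integrable P (\<lambda>z. c n (g z))" for n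
    by (rule integrable_const_bound[where B="real n"]) (simp_all add: c_def max_def min_def abs_real_def split: if_splits)
  have int_eq: "(\<integral>z. c n (g (S z)) \<partial>P) = (\<integral>z. c n (g z) \<partial>P)" for n
  proof -
    have "(\<integral>z. c n (g (S z)) \<partial>P) = (\<integral>z. c n (g z) \<partial>distr P P S)"
      by (subst integral_distr) (auto simp: c_def)
    also have "\<dots> = (\<integral>z. c n (g z) \<partial>P)" using S_distr by simp
    finally show ?thesis .
  qed
  have cgS_int: "integrable P (\<lambda>z. c n (g (S z)))" for n
    by (rule integrable_const_bound[where B="real n"]) (simp_all add: c_def max_def min_def abs_real_def split: if_splits)
  have dn_zero: "(\<integral>z. dn n z \<partial>P) = 0" for n
    unfolding dn_def using int_eq[of n] cgS_int[of n] cg_int[of n] by simp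
  have nn_eq: "(\<integral>\<^sup>+z. ennreal (- dn n z) \<partial>P) = (\<integral>\<^sup>+z. ennreal (dn n z) \<partial>P)" for n
  proof -
    have f1: "(\<integral>\<^sup>+z. ennreal (dn n z) \<partial>P) < \<infinity>" "(\<integral>\<^sup>+z. ennreal (- dn n z) \<partial>P) < \<infinity>"
      using nn_fin_of_int[OF dn_int[of n]] nn_fin_of_int[OF integrable_minus[OF dn_int[of n]]] by auto
    have "(\<integral>z. dn n z \<partial>P) = enn2real (\<integral>\<^sup>+z. ennreal (dn n z) \<partial>P) - enn2real (\<integral>\<^sup>+z. ennreal (- dn n z) \<partial>P)"
      by (rule real_lebesgue_integral_def[OF dn_int])
    then have e: "enn2real (\<integral>\<^sup>+z. ennreal (dn n z) \<partial>P) = enn2real (\<integral>\<^sup>+z. ennreal (- dn n z) \<partial>P)"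
      using dn_zero[of n] by simp
    have "(\<integral>\<^sup>+z. ennreal (- dn n z) \<partial>P) = ennreal (enn2real (\<integral>\<^sup>+z. ennreal (- dn n z) \<partial>P))"
      using f1 by (simp add: ennreal_enn2real)
    also have "\<dots> = ennreal (enn2real (\<integral>\<^sup>+z. ennreal (dn n z) \<partial>P))" using e by simp
    also have "\<dots> = (\<integral>\<^sup>+z. ennreal (dn n z) \<partial>P)"
      using f1 by (simp add: ennreal_enn2real)
    finally show ?thesis .
  qed
  have F_fin: "(\<integral>\<^sup>+z. ennreal (F z) \<partial>P) < \<infinity>"
    using nn_fin_of_int[OF F] .
  have pos_bound: "(\<integral>\<^sup>+z. ennreal (dn n z) \<partial>P) \<le> (\<integral>\<^sup>+z. ennreal (F z) \<partial>P)" for n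
  proof (rule nn_integral_mono_AE)
    show "AE z in P. ennreal (dn n z) \<le> ennreal (F z)"
      using le
    proof eventually_elim
      case (elim z)
      have "max (dn n z) 0 \<le> max (g (S z) - g z) 0"
        unfolding dn_def c_def by (rule clip_facts)
      then have "max (dn n z) 0 \<le> max (F z) 0" using elim by linarith
      then show ?case by (cases "dn n z \<le> 0") (auto simp: ennreal_neg intro!: ennreal_leI)
    qed
  qed
  have lim: "(\<lambda>n. ennreal (- dn n z)) \<longlonglongrightarrow> ennreal (- d z)" for z
    unfolding dn_def d_def c_def
    by (intro tendsto_ennrealI tendsto_minus clip_tendsto)
  have "(\<integral>\<^sup>+z. ennreal (- d z) \<partial>P) = (\<integral>\<^sup>+z. liminf (\<lambda>n. ennreal (- dn n z)) \<partial>P)"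
    by (intro nn_integral_cong lim_imp_Liminf[symmetric, OF _ lim]) simp
  also have "\<dots> \<le> liminf (\<lambda>n. \<integral>\<^sup>+z. ennreal (- dn n z) \<partial>P)"
    by (intro nn_integral_liminf) measurable
  also have "\<dots> \<le> liminf (\<lambda>n. \<integral>\<^sup>+z. ennreal (F z) \<partial>P)"
    using pos_bound nn_eq by (intro Liminf_mono always_eventually allI) simp
  also have "\<dots> = (\<integral>\<^sup>+z. ennreal (F z) \<partial>P)" by (simp add: Liminf_const)
  finally have neg_fin: "(\<integral>\<^sup>+z. ennreal (- d z) \<partial>P) < \<infinity>" using F_fin by auto
  have pos_fin: "(\<integral>\<^sup>+z. ennreal (d z) \<partial>P) < \<infinity>"
  proof -
    have "(\<integral>\<^sup>+z. ennreal (d z) \<partial>P) \<le> (\<integral>\<^sup>+z. ennreal (F z) \<partial>P)"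
      using le by (intro nn_integral_mono_AE) (auto elim!: eventually_mono simp: d_def ennreal_leI)
    then show ?thesis using F_fin by auto
  qed
  have "(\<integral>\<^sup>+z. ennreal (norm (d z)) \<partial>P) = (\<integral>\<^sup>+z. ennreal (d z) + ennreal (- d z) \<partial>P)"
    by (intro nn_integral_cong) (auto simp: abs_real_def ennreal_neg)
  also have "\<dots> = (\<integral>\<^sup>+z. ennreal (d z) \<partial>P) + (\<integral>\<^sup>+z. ennreal (- d z) \<partial>P)"
    by (intro nn_integral_add) auto
  finally have "(\<integral>\<^sup>+z. ennreal (norm (d z)) \<partial>P) < \<infinity>" using pos_fin neg_fin by simp
  then have d_int: "integrable P d" by (auto simp: integrable_iff_bounded)
  have "(\<lambda>n. \<integral>z. dn n z \<partial>P) \<longlonglongrightarrow> (\<integral>z. d z \<partial>P)"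
  proof (rule integral_dominated_convergence[where w="\<lambda>z. norm (d z)"])
    show "AE z in P. (\<lambda>n. dn n z) \<longlonglongrightarrow> d z"
      unfolding dn_def d_def c_def by (intro AE_I2 clip_tendsto)
    show "AE z in P. norm (dn n z) \<le> norm (d z)" for n
      unfolding dn_def d_def c_def by (intro AE_I2) (simp add: clip_facts(3))
  qed (use d_int in auto)
  then have "(\<integral>z. d z \<partial>P) = 0" using dn_zero by (simp add: LIMSEQ_const_iff)
  then show ?thesis using d_int unfolding d_def by simp
qed


lemma funpow_measurable: "T \<in> M \<rightarrow>\<^sub>M M \<Longrightarrow> (T ^^ n) \<in> M \<rightarrow>\<^sub>M M"
proof (induction n)
  case 0 then show ?case by simp
next
  case (Suc n) then show ?case by (simp add: measurable_comp)
qed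

lemma kernel_in:
  assumes K: "K \<in> M \<rightarrow>\<^sub>M prob_algebra N" and x: "x \<in> space M"
  shows "prob_space (K x)" "sets (K x) = sets N" "space (K x) = space N"
  using measurable_space[OF K x] by (auto simp: space_prob_algebra dest: sets_eq_imp_space_eq)

lemma fibre_prob:
  assumes T: "T \<in> M \<rightarrow>\<^sub>M M" and K: "K \<in> M \<rightarrow>\<^sub>M prob_algebra N" and x: "x \<in> space M"
  shows "prob_space (fibre_measure T K x)" "sets (fibre_measure T K x) = sets (PiM UNIV (\<lambda>_::nat. N))"
    "space (fibre_measure T K x) = space (PiM UNIV (\<lambda>_::nat. N))"
proof -
  have kx: "(T ^^ k) x \<in> space M" for k using measurable_space[OF funpow_measurable[OF T] x] .
  show "prob_space (fibre_measure T K x)" unfolding fibre_measure_def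
    by (intro prob_space_PiM kernel_in[OF K kx])
  show s: "sets (fibre_measure T K x) = sets (PiM UNIV (\<lambda>_::nat. N))" unfolding fibre_measure_def
    by (intro sets_PiM_cong refl kernel_in[OF K kx])
  show "space (fibre_measure T K x) = space (PiM UNIV (\<lambda>_::nat. N))"
    by (rule sets_eq_imp_space_eq[OF s])
qed

lemma fibre_kernel:
  assumes T: "T \<in> M \<rightarrow>\<^sub>M M" and K: "K \<in> M \<rightarrow>\<^sub>M prob_algebra N"
  shows "fibre_measure T K \<in> M \<rightarrow>\<^sub>M prob_algebra (PiM UNIV (\<lambda>_::nat. N))"
proof (rule measurable_prob_algebra_generated[where \<Omega>="PiE UNIV (\<lambda>_. space N)" and G="prod_algebra UNIV (\<lambda>_. N)"])
  show "sets (PiM UNIV (\<lambda>_::nat. N)) = sigma_sets (PiE UNIV (\<lambda>_. space N)) (prod_algebra UNIV (\<lambda>_. N))"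
    by (rule sets_PiM)
  show "Int_stable (prod_algebra UNIV (\<lambda>_::nat. N))" by (rule Int_stable_prod_algebra)
  show "prod_algebra UNIV (\<lambda>_::nat. N) \<subseteq> Pow (PiE UNIV (\<lambda>_. space N))"
    by (rule prod_algebra_sets_into_space)
  show "prob_space (fibre_measure T K a)" if "a \<in> space M" for a by (rule fibre_prob[OF T K that])
  show "sets (fibre_measure T K a) = sets (PiM UNIV (\<lambda>_::nat. N))" if "a \<in> space M" for a
    by (rule fibre_prob[OF T K that])
next
  fix A assume "A \<in> prod_algebra UNIV (\<lambda>_::nat. N)"
  then obtain J E where A: "A = prod_emb UNIV (\<lambda>_. N) J (PiE J E)" and J: "finite J"
    and E: "\<And>i. i \<in> J \<Longrightarrow> E i \<in> sets N"
    by (elim prod_algebraE) auto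
  have kx: "(T ^^ k) x \<in> space M" if "x \<in> space M" for k x
    using measurable_space[OF funpow_measurable[OF T] that] .
  have eq: "emeasure (fibre_measure T K x) A = (\<Prod>j\<in>J. emeasure (K ((T ^^ j) x)) (E j))"
    if x: "x \<in> space M" for x
  proof -
    have "A = prod_emb UNIV (\<lambda>k. K ((T ^^ k) x)) J (PiE J E)"
      unfolding A prod_emb_def using kernel_in(3)[OF K kx[OF x]] by simp
    then show ?thesis unfolding fibre_measure_def
      using J E kernel_in[OF K kx[OF x]] by (simp add: emeasure_PiM_emb)
  qed
  have m: "(\<lambda>x. emeasure (K ((T ^^ j) x)) (E j)) \<in> borel_measurable M" if "j \<in> J" for j
  proof -
    have "(\<lambda>\<mu>. emeasure \<mu> (E j)) \<in> borel_measurable (subprob_algebra N)"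
      using E[OF that] by (rule measurable_emeasure_subprob_algebra)
    moreover have "(\<lambda>x. K ((T ^^ j) x)) \<in> M \<rightarrow>\<^sub>M subprob_algebra N"
      using measurable_comp[OF funpow_measurable[OF T] measurable_prob_algebraD[OF K]]
      by (simp add: comp_def)
    ultimately show ?thesis by (rule measurable_compose[rotated])
  qed
  have "(\<lambda>x. \<Prod>j\<in>J. emeasure (K ((T ^^ j) x)) (E j)) \<in> borel_measurable M"
    using m by (rule borel_measurable_prod_ennreal)
  then show "(\<lambda>x. emeasure (fibre_measure T K x) A) \<in> borel_measurable M"
    by (rule measurable_cong[THEN iffD2, rotated]) (simp add: eq)
qed

lemma case_nat_measurable:
  "(\<lambda>(s, \<omega>). case_nat s \<omega>) \<in> (Mf 0 \<Otimes>\<^sub>M PiM UNIV (\<lambda>n. Mf (Suc n))) \<rightarrow>\<^sub>M PiM UNIV Mf"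
proof -
  have "(\<lambda>z i. case_nat (fst z) (snd z) i) \<in> (Mf 0 \<Otimes>\<^sub>M PiM UNIV (\<lambda>n. Mf (Suc n))) \<rightarrow>\<^sub>M PiM UNIV Mf"
  proof (rule measurable_PiM_single')
    fix i :: nat
    show "(\<lambda>z. case_nat (fst z) (snd z) i) \<in> (Mf 0 \<Otimes>\<^sub>M PiM UNIV (\<lambda>n. Mf (Suc n))) \<rightarrow>\<^sub>M Mf i"
    proof (cases i)
      case 0 then show ?thesis by simp
    next
      case (Suc j)
      have "(\<lambda>z. snd z j) \<in> (Mf 0 \<Otimes>\<^sub>M PiM UNIV (\<lambda>n. Mf (Suc n))) \<rightarrow>\<^sub>M Mf (Suc j)"
        by (rule measurable_compose[OF measurable_snd measurable_component_singleton]) simp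
      then show ?thesis using Suc by simp
    qed
  next
    show "(\<lambda>z i. case_nat (fst z) (snd z) i) \<in> space (Mf 0 \<Otimes>\<^sub>M PiM UNIV (\<lambda>n. Mf (Suc n))) \<rightarrow> (\<Pi>\<^sub>E i\<in>UNIV. space (Mf i))"
      by (auto simp: space_pair_measure space_PiM PiE_iff split: nat.split)
  qed
  then show ?thesis by (simp add: case_prod_beta')
qed

lemma my_nat_eq_diff_eq:
  fixes a b c :: nat
  shows "c \<le> b \<Longrightarrow> a = b - c \<longleftrightarrow> a + c = b"
  by auto

lemma PiM_split_Suc:
  assumes Mp: "\<And>i. prob_space (Mf i)"
  shows "distr (Mf 0 \<Otimes>\<^sub>M PiM UNIV (\<lambda>n. Mf (Suc n))) (PiM UNIV Mf) (\<lambda>(s, \<omega>). case_nat s \<omega>) = PiM UNIV Mf"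
    (is "?D = _")
proof -
  interpret P0: product_prob_space Mf UNIV by (rule product_prob_spaceI) (rule Mp)
  interpret S': prob_space "PiM UNIV (\<lambda>n. Mf (Suc n))" by (intro prob_space_PiM Mp)
  interpret PP: pair_prob_space "Mf 0" "PiM UNIV (\<lambda>n. Mf (Suc n))"
    by (simp add: pair_prob_space_def pair_sigma_finite_def Mp S'.prob_space_axioms
        prob_space_imp_sigma_finite)
  show ?thesis
  proof (rule P0.PiM_eq)
    show "sets ?D = sets (PiM UNIV Mf)" by simp
  next
    fix J :: "nat set" and E assume J: "finite J" "J \<subseteq> UNIV" "\<And>j. j \<in> J \<Longrightarrow> E j \<in> sets (Mf j)"
    let ?X = "prod_emb UNIV Mf J (\<Pi>\<^sub>E j\<in>J. E j)"
    let ?f = "(\<lambda>(s, \<omega>). case_nat s \<omega>) :: _ \<Rightarrow> nat \<Rightarrow> _"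
    have "\<And>j x. j \<in> J \<Longrightarrow> x \<in> E j \<Longrightarrow> x \<in> space (Mf j)"
      using J(3)[THEN sets.sets_into_space] by auto
    with J have "?f -` ?X \<inter> space (Mf 0 \<Otimes>\<^sub>M PiM UNIV (\<lambda>n. Mf (Suc n))) = (if 0 \<in> J then E 0 else space (Mf 0)) \<times>
      (prod_emb UNIV (\<lambda>n. Mf (Suc n)) (Suc -` J) (\<Pi>\<^sub>E j\<in>Suc -` J. E (Suc j)))" (is "_ = ?E \<times> ?F")
      by (auto simp: space_pair_measure space_PiM PiE_iff prod_emb_def all_conj_distrib
          split: nat.split nat.split_asm)
    then have "emeasure ?D ?X = emeasure (Mf 0 \<Otimes>\<^sub>M PiM UNIV (\<lambda>n. Mf (Suc n))) (?E \<times> ?F)"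
      by (subst emeasure_distr[OF case_nat_measurable]) (auto intro!: sets_PiM_I simp: J)
    also have "\<dots> = emeasure (Mf 0) ?E * emeasure (PiM UNIV (\<lambda>n. Mf (Suc n))) ?F"
      using J by (intro S'.emeasure_pair_measure_Times) (auto intro!: sets_PiM_I finite_vimageI)
    also have "emeasure (PiM UNIV (\<lambda>n. Mf (Suc n))) ?F = (\<Prod>j\<in>Suc -` J. emeasure (Mf (Suc j)) (E (Suc j)))"
      using J by (intro emeasure_PiM_emb Mp) (simp_all add: finite_vimageI)
    also have "\<dots> = (\<Prod>j\<in>J - {0}. emeasure (Mf j) (E j))"
      by (rule prod.reindex_cong [of "\<lambda>x. x - 1"])
        (auto simp: image_iff my_nat_eq_diff_eq ac_simps cong: conj_cong intro!: inj_onI)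
    also have "emeasure (Mf 0) ?E * (\<Prod>j\<in>J - {0}. emeasure (Mf j) (E j)) = (\<Prod>j\<in>J. emeasure (Mf j) (E j))"
      by (auto simp: prob_space.emeasure_space_1[OF Mp] prod.remove J)
    finally show "emeasure ?D ?X = (\<Prod>j\<in>J. emeasure (Mf j) (E j))" .
  qed
qed


lemma integral_measurable_kernel2:
  fixes f :: "_ \<Rightarrow> _ \<Rightarrow> _::{banach, second_countable_topology}"
  assumes f[measurable]: "(\<lambda>(x, y). f x y) \<in> borel_measurable (M \<Otimes>\<^sub>M N)"
  assumes L[measurable]: "L \<in> measurable M (subprob_algebra N)"
  shows "(\<lambda>x. integral\<^sup>L (L x) (f x)) \<in> borel_measurable M"
proof -
  note integral_measurable_subprob_algebra[measurable]
  note measurable_distr2[measurable]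
  have "(\<lambda>x. integral\<^sup>L (distr (L x) (M \<Otimes>\<^sub>M N) (\<lambda>y. (x, y))) (\<lambda>(x, y). f x y)) \<in> borel_measurable M"
    by measurable
  then show ?thesis
    by (rule measurable_cong[THEN iffD1, rotated])
       (auto simp: integral_distr dest: measurable_space[OF L] simp: space_subprob_algebra)
qed

locale setting =
  fixes M :: "'a measure" and N :: "'b measure" and T :: "'a \<Rightarrow> 'a" and K :: "'a \<Rightarrow> 'b measure"
  assumes M_prob: "prob_space M"
    and T_mp: "preserves M T"
    and K_kernel: "K \<in> M \<rightarrow>\<^sub>M prob_algebra N"
    and Q_erg: "ergodic (skew_measure M N T K) (shift_hat T)"
begin

abbreviation "\<Omega> \<equiv> PiM UNIV (\<lambda>_::nat. N)"
abbreviation "Q \<equiv> skew_measure M N T K"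
abbreviation "Th \<equiv> shift_hat T"
abbreviation "Qx \<equiv> fibre_measure T K"

lemma T_meas[measurable]: "T \<in> M \<rightarrow>\<^sub>M M" and T_distr: "distr M M T = M"
  using T_mp by (auto simp: preserves_def)

lemma K_sub[measurable]: "K \<in> M \<rightarrow>\<^sub>M subprob_algebra N"
  by (rule measurable_prob_algebraD[OF K_kernel])

lemma Qx_kernel: "Qx \<in> M \<rightarrow>\<^sub>M prob_algebra \<Omega>"
  by (rule fibre_kernel[OF T_meas K_kernel])

lemma Qx_sub[measurable]: "Qx \<in> M \<rightarrow>\<^sub>M subprob_algebra \<Omega>"
  by (rule measurable_prob_algebraD[OF Qx_kernel])

lemma Qx_prob: "x \<in> space M \<Longrightarrow> prob_space (Qx x)"
  and Qx_sets: "x \<in> space M \<Longrightarrow> sets (Qx x) = sets \<Omega>"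
  and Qx_space: "x \<in> space M \<Longrightarrow> space (Qx x) = space \<Omega>"
  using fibre_prob[OF T_meas K_kernel] by auto

lemma M_ne: "space M \<noteq> {}"
  using prob_space.not_empty[OF M_prob] .

definition "Qk x = distr (Qx x) (M \<Otimes>\<^sub>M \<Omega>) (\<lambda>\<omega>. (x, \<omega>))"

lemma Qk[measurable]: "Qk \<in> M \<rightarrow>\<^sub>M subprob_algebra (M \<Otimes>\<^sub>M \<Omega>)"
  unfolding Qk_def
  by (rule measurable_distr2[OF _ Qx_sub]) (simp add: case_prod_Pair)

lemma Q_def': "Q = M \<bind> Qk"
  unfolding skew_measure_def Qk_def by simp

lemma Qk_sets: "x \<in> space M \<Longrightarrow> sets (Qk x) = sets (M \<Otimes>\<^sub>M \<Omega>)"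
  unfolding Qk_def by simp

lemma sets_Q[measurable_cong]: "sets Q = sets (M \<Otimes>\<^sub>M \<Omega>)"
  unfolding Q_def' by (rule sets_bind[OF Qk_sets M_ne])

lemma space_Q: "space Q = space (M \<Otimes>\<^sub>M \<Omega>)"
  by (rule sets_eq_imp_space_eq[OF sets_Q])

lemma Pair_meas: "x \<in> space M \<Longrightarrow> (\<lambda>\<omega>. (x, \<omega>)) \<in> Qx x \<rightarrow>\<^sub>M M \<Otimes>\<^sub>M \<Omega>"
  by (rule measurable_Pair) (auto simp: measurable_cong_sets[OF Qx_sets refl] intro: measurable_const)

lemma Q_prob: "prob_space Q"
proof -
  have "AE x in M. prob_space (Qk x)"
    by (intro AE_I2) (auto simp: Qk_def intro!: prob_space.prob_space_distr Qx_prob Pair_meas)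
  then show ?thesis
    unfolding Q_def' by (intro prob_space.prob_space_bind[OF M_prob _ Qk])
qed

lemma AE_Q:
  assumes P[measurable]: "Measurable.pred (M \<Otimes>\<^sub>M \<Omega>) P"
  shows "(AE z in Q. P z) \<longleftrightarrow> (AE x in M. AE \<omega> in Qx x. P (x, \<omega>))"
proof -
  have "(AE z in Q. P z) \<longleftrightarrow> (AE x in M. AE z in Qk x. P z)"
    unfolding Q_def' by (rule AE_bind[OF Qk P])
  also have "\<dots> \<longleftrightarrow> (AE x in M. AE \<omega> in Qx x. P (x, \<omega>))"
  proof (rule AE_cong)
    fix x assume x: "x \<in> space M"
    show "(AE z in Qk x. P z) \<longleftrightarrow> (AE \<omega> in Qx x. P (x, \<omega>))"
      unfolding Qk_def by (rule AE_distr_iff[OF Pair_meas[OF x]]) simp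
  qed
  finally show ?thesis .
qed

lemma nn_integral_Q:
  assumes f[measurable]: "f \<in> borel_measurable (M \<Otimes>\<^sub>M \<Omega>)"
  shows "(\<integral>\<^sup>+z. f z \<partial>Q) = (\<integral>\<^sup>+x. \<integral>\<^sup>+\<omega>. f (x, \<omega>) \<partial>Qx x \<partial>M)"
proof -
  have "(\<integral>\<^sup>+z. f z \<partial>Q) = (\<integral>\<^sup>+x. \<integral>\<^sup>+z. f z \<partial>Qk x \<partial>M)"
    unfolding Q_def' by (rule nn_integral_bind[OF f Qk])
  also have "\<dots> = (\<integral>\<^sup>+x. \<integral>\<^sup>+\<omega>. f (x, \<omega>) \<partial>Qx x \<partial>M)"
    by (intro nn_integral_cong) (simp add: Qk_def nn_integral_distr Pair_meas)
  finally show ?thesis .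
qed

lemma Th_meas[measurable]: "Th \<in> (M \<Otimes>\<^sub>M \<Omega>) \<rightarrow>\<^sub>M (M \<Otimes>\<^sub>M \<Omega>)"
  and Th_distr: "distr Q Q Th = Q"
  and Th_erg: "\<And>A. A \<in> sets Q \<Longrightarrow> Th -` A \<inter> space Q = A \<Longrightarrow> measure Q A = 0 \<or> measure Q A = 1"
  using Q_erg by (auto simp: ergodic_def preserves_def measurable_cong_sets[OF sets_Q sets_Q])

lemma Th_Q_meas: "Th \<in> Q \<rightarrow>\<^sub>M Q"
  using Th_meas by (simp add: measurable_cong_sets[OF sets_Q sets_Q])

lemma Th_simp: "Th (x, \<omega>) = (T x, \<lambda>k. \<omega> (Suc k))"
  by (simp add: shift_hat_def)

lemma Th_iter_distr: "distr Q Q (Th ^^ n) = Q"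
proof (induction n)
  case 0 then show ?case by (simp add: distr_id2[OF sets_Q[symmetric]] cong: distr_cong) 
next
  case (Suc n)
  have m: "(Th ^^ n) \<in> Q \<rightarrow>\<^sub>M Q" by (rule funpow_measurable[OF Th_Q_meas])
  have "distr Q Q (Th ^^ Suc n) = distr Q Q (Th \<circ> (Th ^^ n))" by simp
  also have "\<dots> = distr (distr Q Q (Th ^^ n)) Q Th"
    by (rule distr_distr[OF Th_Q_meas m, symmetric])
  also have "\<dots> = Q" using Suc Th_distr by simp
  finally show ?case .
qed

lemma AE_iter:
  assumes P[measurable]: "Measurable.pred (M \<Otimes>\<^sub>M \<Omega>) P" and ae: "AE z in Q. P z"
  shows "AE z in Q. \<forall>n. P ((Th ^^ n) z)"
proof (subst AE_all_countable, intro allI)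
  fix n
  have m: "(Th ^^ n) \<in> Q \<rightarrow>\<^sub>M Q" by (rule funpow_measurable[OF Th_Q_meas])
  have "AE z in distr Q Q (Th ^^ n). P z" by (subst Th_iter_distr) (rule ae)
  then show "AE z in Q. P ((Th ^^ n) z)"
    by (subst (asm) AE_distr_iff[OF m]) (auto simp: sets_Q space_Q)
qed

end


context setting begin

sublocale QP: prob_space Q by (rule Q_prob)

lemma T_iter_meas[measurable]: "(T ^^ k) \<in> M \<rightarrow>\<^sub>M M"
  by (rule funpow_measurable[OF T_meas])

lemma T_iter_space: "x \<in> space M \<Longrightarrow> (T ^^ k) x \<in> space M"
  by (rule measurable_space[OF T_iter_meas])

lemma invariant_01:
  assumes A: "A \<in> sets Q" and inv: "\<And>z. z \<in> space Q \<Longrightarrow> Th z \<in> A \<longleftrightarrow> z \<in> A"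
  shows "measure Q A = 0 \<or> measure Q A = 1"
proof (rule Th_erg[OF A])
  have sp: "z \<in> space Q \<Longrightarrow> Th z \<in> space Q" for z by (rule measurable_space[OF Th_Q_meas])
  show "Th -` A \<inter> space Q = A"
    using inv sets.sets_into_space[OF A] by blast
qed

end

locale setting_h = setting M N T K for M :: "'a measure" and N :: "'b measure" and T K +
  fixes \<Theta> :: "('a \<times> 'b) measure" and h :: "'a \<times> 'b \<Rightarrow> real"
  assumes K_disint: "\<And>H :: 'a \<times> 'b \<Rightarrow> ennreal. H \<in> borel_measurable (M \<Otimes>\<^sub>M N) \<Longrightarrow>
        (\<integral>\<^sup>+ z. H z \<partial>\<Theta>) = (\<integral>\<^sup>+ x. (\<integral>\<^sup>+ y. H (x, y) \<partial>K x) \<partial>M)"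
    and h_meas[measurable]: "h \<in> borel_measurable (M \<Otimes>\<^sub>M N)"
    and nonconst: "AE x in M. \<not> (\<exists>c. AE y in K x. h (x, y) = c)"
    and h_int: "integrable \<Theta> h"
    and h_mean: "(\<integral> z. h z \<partial>\<Theta>) = 0"
begin

definition "f z = h (fst z, snd z 0)"
definition "S n z = (\<Sum>k<n. h ((T ^^ k) (fst z), snd z k))"
definition "Lsup z = limsup (\<lambda>n. ereal (S n z))"

lemma f_meas[measurable]: "f \<in> borel_measurable (M \<Otimes>\<^sub>M \<Omega>)"
  unfolding f_def by measurable

lemma S_meas[measurable]: "S n \<in> borel_measurable (M \<Otimes>\<^sub>M \<Omega>)"
  unfolding S_def by measurable

lemma Lsup_meas[measurable]: "Lsup \<in> borel_measurable (M \<Otimes>\<^sub>M \<Omega>)"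
  unfolding Lsup_def by measurable

lemma S_0[simp]: "S 0 z = 0" by (simp add: S_def)

lemma S_Suc: "S (Suc n) z = f z + S n (Th z)"
proof -
  obtain x \<omega> where z: "z = (x, \<omega>)" by (cases z)
  have "S (Suc n) z = h (x, \<omega> 0) + (\<Sum>k<n. h ((T ^^ Suc k) x, \<omega> (Suc k)))"
    unfolding S_def z by (simp only: sum.lessThan_Suc_shift fst_conv snd_conv funpow_0)
  also have "(\<Sum>k<n. h ((T ^^ Suc k) x, \<omega> (Suc k))) = S n (Th z)"
    unfolding S_def z Th_simp by (simp add: funpow_Suc_right del: funpow.simps)
  finally show ?thesis by (simp add: f_def z)
qed

lemma Lsup_Th: "Lsup z = ereal (f z) + Lsup (Th z)"
proof -
  have "Lsup z = limsup (\<lambda>n. ereal (S (Suc n) z))"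
    unfolding Lsup_def using limsup_shift[of "\<lambda>n. ereal (S n z)"] by simp
  also have "\<dots> = limsup (\<lambda>n. ereal (f z) + ereal (S n (Th z)))"
    by (simp add: S_Suc)
  also have "\<dots> = ereal (f z) + Lsup (Th z)"
    unfolding Lsup_def by (rule Limsup_add_ereal_left) simp_all
  finally show ?thesis .
qed

lemma comp0:
  assumes H[measurable]: "H \<in> borel_measurable (M \<Otimes>\<^sub>M N)"
  shows "(\<integral>\<^sup>+z. H (fst z, snd z 0) \<partial>Q) = (\<integral>\<^sup>+z. H z \<partial>\<Theta>)"
proof -
  have "(\<integral>\<^sup>+z. H (fst z, snd z 0) \<partial>Q) = (\<integral>\<^sup>+x. \<integral>\<^sup>+\<omega>. H (x, \<omega> 0) \<partial>Qx x \<partial>M)"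
    by (subst nn_integral_Q) simp_all
  also have "\<dots> = (\<integral>\<^sup>+x. \<integral>\<^sup>+y. H (x, y) \<partial>K x \<partial>M)"
  proof (intro nn_integral_cong)
    fix x assume x: "x \<in> space M"
    have kp: "prob_space (K ((T ^^ i) x))" for i by (rule kernel_in[OF K_kernel T_iter_space[OF x]])
    have d: "distr (Qx x) (K x) (\<lambda>\<omega>. \<omega> 0) = K x"
      using distr_PiM_component[of UNIV "\<lambda>i. K ((T ^^ i) x)" 0] kp
      by (simp add: fibre_measure_def)
    have m0: "(\<lambda>\<omega>. \<omega> 0) \<in> Qx x \<rightarrow>\<^sub>M K x"
      using measurable_component_singleton[of 0 UNIV "\<lambda>i. K ((T ^^ i) x)"]
      by (simp add: fibre_measure_def)
    have mH: "(\<lambda>y. H (x, y)) \<in> borel_measurable (K x)"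
      using measurable_Pair2[OF H x] by (simp add: measurable_cong_sets[OF kernel_in(2)[OF K_kernel x] refl])
    have "(\<integral>\<^sup>+y. H (x, y) \<partial>K x) = (\<integral>\<^sup>+y. H (x, y) \<partial>distr (Qx x) (K x) (\<lambda>\<omega>. \<omega> 0))"
      using d by simp
    also have "\<dots> = (\<integral>\<^sup>+\<omega>. H (x, \<omega> 0) \<partial>Qx x)"
      by (rule nn_integral_distr[OF m0]) (use mH in simp)
    finally show "(\<integral>\<^sup>+\<omega>. H (x, \<omega> 0) \<partial>Qx x) = (\<integral>\<^sup>+y. H (x, y) \<partial>K x)" ..
  qed
  also have "\<dots> = (\<integral>\<^sup>+z. H z \<partial>\<Theta>)" by (rule K_disint[symmetric]) simp
  finally show ?thesis .
qed

lemma f_int: "integrable Q f"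
proof -
  have "(\<integral>\<^sup>+z. ennreal (norm (f z)) \<partial>Q) = (\<integral>\<^sup>+z. ennreal (norm (h z)) \<partial>\<Theta>)"
    unfolding f_def by (rule comp0[of "\<lambda>z. ennreal (norm (h z))"]) simp
  also have "\<dots> < \<infinity>" using h_int by (simp add: integrable_iff_bounded)
  finally show ?thesis by (simp add: integrable_iff_bounded measurable_cong_sets[OF sets_Q refl])
qed

lemma f_mean: "(\<integral>z. f z \<partial>Q) = 0"
proof -
  have "(\<integral>z. f z \<partial>Q) = enn2real (\<integral>\<^sup>+z. ennreal (f z) \<partial>Q) - enn2real (\<integral>\<^sup>+z. ennreal (- f z) \<partial>Q)"
    by (rule real_lebesgue_integral_def[OF f_int])
  also have "(\<integral>\<^sup>+z. ennreal (f z) \<partial>Q) = (\<integral>\<^sup>+z. ennreal (h z) \<partial>\<Theta>)"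
    unfolding f_def by (rule comp0[of "\<lambda>z. ennreal (h z)"]) simp
  also have "(\<integral>\<^sup>+z. ennreal (- f z) \<partial>Q) = (\<integral>\<^sup>+z. ennreal (- h z) \<partial>\<Theta>)"
    unfolding f_def by (rule comp0[of "\<lambda>z. ennreal (- h z)"]) simp
  also have "enn2real (\<integral>\<^sup>+z. ennreal (h z) \<partial>\<Theta>) - enn2real (\<integral>\<^sup>+z. ennreal (- h z) \<partial>\<Theta>) = (\<integral>z. h z \<partial>\<Theta>)"
    by (rule real_lebesgue_integral_def[OF h_int, symmetric])
  finally show ?thesis using h_mean by simp
qed

lemma trichotomy:
  "(AE z in Q. Lsup z = \<infinity>) \<or> (AE z in Q. Lsup z = -\<infinity>) \<or> (AE z in Q. \<bar>Lsup z\<bar> \<noteq> \<infinity>)"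
proof -
  define A1 where "A1 = {z \<in> space Q. Lsup z = \<infinity>}"
  define A2 where "A2 = {z \<in> space Q. Lsup z = -\<infinity>}"
  define A3 where "A3 = {z \<in> space Q. \<bar>Lsup z\<bar> \<noteq> \<infinity>}"
  have Lm: "Lsup \<in> borel_measurable Q" by (simp add: measurable_cong_sets[OF sets_Q refl])
  have s: "A1 \<in> sets Q" "A2 \<in> sets Q" "A3 \<in> sets Q"
    unfolding A1_def A2_def A3_def using Lm by measurable
  have sp: "z \<in> space Q \<Longrightarrow> Th z \<in> space Q" for z by (rule measurable_space[OF Th_Q_meas])
  have m1: "measure Q A1 = 0 \<or> measure Q A1 = 1"
  proof (rule invariant_01[OF s(1)])
    fix z assume z: "z \<in> space Q"
    show "Th z \<in> A1 \<longleftrightarrow> z \<in> A1"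
      unfolding A1_def using z sp[OF z] Lsup_Th[of z] by (cases "Lsup (Th z)") auto
  qed
  have m2: "measure Q A2 = 0 \<or> measure Q A2 = 1"
  proof (rule invariant_01[OF s(2)])
    fix z assume z: "z \<in> space Q"
    show "Th z \<in> A2 \<longleftrightarrow> z \<in> A2"
      unfolding A2_def using z sp[OF z] Lsup_Th[of z] by (cases "Lsup (Th z)") auto
  qed
  have m3: "measure Q A3 = 0 \<or> measure Q A3 = 1"
  proof (rule invariant_01[OF s(3)])
    fix z assume z: "z \<in> space Q"
    show "Th z \<in> A3 \<longleftrightarrow> z \<in> A3"
      unfolding A3_def using z sp[OF z] Lsup_Th[of z] by (cases "Lsup (Th z)") auto
  qed
  have un: "A1 \<union> A2 \<union> A3 = space Q"
  proof -
    have "Lsup z = \<infinity> \<or> Lsup z = -\<infinity> \<or> \<bar>Lsup z\<bar> \<noteq> \<infinity>" for z by (cases "Lsup z") auto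
    then show ?thesis by (auto simp: A1_def A2_def A3_def)
  qed
  have "measure Q (A1 \<union> A2 \<union> A3) = measure Q A1 + measure Q A2 + measure Q A3"
  proof -
    have "measure Q (A1 \<union> A2 \<union> A3) = measure Q (A1 \<union> A2) + measure Q A3"
      by (rule QP.finite_measure_Union) (use s in \<open>auto simp: A1_def A2_def A3_def\<close>)
    moreover have "measure Q (A1 \<union> A2) = measure Q A1 + measure Q A2"
      by (rule QP.finite_measure_Union) (use s in \<open>auto simp: A1_def A2_def A3_def\<close>)
    ultimately show ?thesis by simp
  qed
  then have "measure Q A1 + measure Q A2 + measure Q A3 = 1" using un QP.prob_space by simp
  then have "measure Q A1 = 1 \<or> measure Q A2 = 1 \<or> measure Q A3 = 1" using m1 m2 m3 by auto
  then show ?thesis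
  proof (elim disjE)
    assume "measure Q A1 = 1"
    then have "AE z in Q. z \<in> A1" by (rule QP.AE_prob_1)
    then show ?thesis unfolding A1_def by (auto elim: eventually_mono)
  next
    assume "measure Q A2 = 1"
    then have "AE z in Q. z \<in> A2" by (rule QP.AE_prob_1)
    then show ?thesis unfolding A2_def by (auto elim: eventually_mono)
  next
    assume "measure Q A3 = 1"
    then have "AE z in Q. z \<in> A3" by (rule QP.AE_prob_1)
    then show ?thesis unfolding A3_def by (auto elim: eventually_mono)
  qed
qed

end


lemma SUP_split0:
  fixes X :: "nat \<Rightarrow> 'c::complete_linorder"
  shows "(SUP n. X n) = max (X 0) (SUP n. X (Suc n))"
proof (rule antisym)
  show "(SUP n. X n) \<le> max (X 0) (SUP n. X (Suc n))"
  proof (rule SUP_least)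
    fix n show "X n \<le> max (X 0) (SUP n. X (Suc n))"
    proof (cases n)
      case 0 then show ?thesis by simp
    next
      case (Suc m)
      have "X (Suc m) \<le> (SUP n. X (Suc n))" by (rule SUP_upper) simp
      then show ?thesis using Suc by (simp add: le_max_iff_disj)
    qed
  qed
  show "max (X 0) (SUP n. X (Suc n)) \<le> (SUP n. X n)"
    by (auto intro!: SUP_upper SUP_least)
qed

context setting_h begin

lemma S_bounded_above:
  assumes "Lsup z = -\<infinity>"
  shows "\<exists>B. \<forall>n. S n z \<le> B"
proof -
  have "(\<lambda>n. ereal (S n z)) \<longlonglongrightarrow> -\<infinity>"
    using assms unfolding Lsup_def by (simp add: limsup_MInfty)
  then obtain N where N: "\<And>n. n \<ge> N \<Longrightarrow> ereal (S n z) \<le> ereal 0"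
    unfolding Lim_MInfty by blast
  define B where "B = (\<Sum>k<N. \<bar>S k z\<bar>)"
  have "S n z \<le> B" for n
  proof (cases "n < N")
    case True
    have "\<bar>S n z\<bar> \<le> B" unfolding B_def
      by (rule member_le_sum) (use True in auto)
    then show ?thesis by simp
  next
    case False
    then have "S n z \<le> 0" using N[of n] by simp
    moreover have "0 \<le> B" unfolding B_def by (simp add: sum_nonneg)
    ultimately show ?thesis by simp
  qed
  then show ?thesis by blast
qed

lemma no_minf: "\<not> (AE z in Q. Lsup z = -\<infinity>)"
proof
  assume ae: "AE z in Q. Lsup z = -\<infinity>"
  define W where "W z = (SUP n. ereal (S n z))" for z
  define w where "w z = real_of_ereal (W z)" for z
  have W_meas[measurable]: "W \<in> borel_measurable (M \<Otimes>\<^sub>M \<Omega>)" unfolding W_def by measurable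
  have w_meas[measurable]: "w \<in> borel_measurable (M \<Otimes>\<^sub>M \<Omega>)" unfolding w_def by measurable
  have W_ge0: "0 \<le> W z" for z
  proof -
    have "ereal (S 0 z) \<le> W z" unfolding W_def by (rule SUP_upper) simp
    then show ?thesis by (simp add: zero_ereal_def)
  qed
  have W_rec: "W z = max 0 (ereal (f z) + W (Th z))" for z
  proof -
    have "W z = max (ereal (S 0 z)) (SUP n. ereal (S (Suc n) z))"
      unfolding W_def by (rule SUP_split0)
    also have "(SUP n. ereal (S (Suc n) z)) = (SUP n. ereal (f z) + ereal (S n (Th z)))"
      by (simp add: S_Suc)
    also have "\<dots> = ereal (f z) + W (Th z)"
      unfolding W_def by (rule SUP_ereal_add_right) simp_all
    finally show ?thesis by (simp add: zero_ereal_def)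
  qed
  have W_fin: "W z < \<infinity>" if L: "Lsup z = -\<infinity>" for z
  proof -
    obtain B where B: "\<And>n. S n z \<le> B" using S_bounded_above[OF L] by blast
    have "W z \<le> ereal B" unfolding W_def by (rule SUP_least) (simp add: B)
    then show ?thesis using le_less_trans[of "W z" "ereal B" \<infinity>] by simp
  qed
  have key: "w z = max 0 (f z + w (Th z))" if Wz: "W z < \<infinity>" for z
  proof -
    have "ereal (f z) + W (Th z) \<le> W z" using W_rec[of z] by simp
    then have "W (Th z) < \<infinity>" using Wz by (cases "W (Th z)") auto
    then obtain a where a: "W (Th z) = ereal a" using W_ge0[of "Th z"] by (cases "W (Th z)") auto
    obtain b where b: "W z = ereal b" using Wz W_ge0[of z] by (cases "W z") auto
    show ?thesis using W_rec[of z] unfolding w_def a b by (simp add: max_def split: if_splits)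
  qed
  have aeW: "AE z in Q. W z < \<infinity>" using ae by (rule eventually_mono) (rule W_fin)
  have key2: "f z + w (Th z) \<le> w z" if Wz: "W z < \<infinity>" for z
    using key[OF Wz] by linarith
  have Thpres: "preserves Q Th" using Q_erg by (simp add: ergodic_def)
  have "integrable Q (\<lambda>z. w (Th z) - w z) \<and> (\<integral>z. w (Th z) - w z \<partial>Q) = 0"
  proof (rule coboundary_integral_zero[OF Q_prob Thpres _ integrable_minus[OF f_int]])
    show "w \<in> borel_measurable Q" by (simp add: measurable_cong_sets[OF sets_Q refl])
    show "AE z in Q. w (Th z) - w z \<le> - f z"
      using aeW by (rule eventually_mono) (use key2 in force)
  qed
  then have d_int: "integrable Q (\<lambda>z. w (Th z) - w z)" and d_0: "(\<integral>z. w (Th z) - w z \<partial>Q) = 0"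
    by auto
  define e where "e z = - (w (Th z) - w z) - f z" for z
  have e_int: "integrable Q e" unfolding e_def by (rule Bochner_Integration.integrable_diff[OF integrable_minus[OF d_int] f_int])
  have e_0: "(\<integral>z. e z \<partial>Q) = 0" unfolding e_def using d_0 f_mean by (simp only: Bochner_Integration.integral_diff[OF integrable_minus[OF d_int] f_int] integral_minus)
  have e_nn: "AE z in Q. 0 \<le> e z"
    using aeW by (rule eventually_mono) (use key2 in \<open>force simp: e_def\<close>)
  have "AE z in Q. e z = 0"
    using integral_nonneg_eq_0_iff_AE[OF e_int e_nn] e_0 by simp
  then have ae2: "AE z in Q. Lsup z = -\<infinity> \<and> w (Th z) = w z - f z"
    using ae by eventually_elim (simp add: e_def)
  have ae3: "AE z in Q. \<forall>n. Lsup ((Th ^^ n) z) = -\<infinity> \<and> w (Th ((Th ^^ n) z)) = w ((Th ^^ n) z) - f ((Th ^^ n) z)"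
    by (rule AE_iter[OF _ ae2]) measurable
  have iter: "w ((Th ^^ n) z) = w z - S n z"
    if "\<forall>n. w (Th ((Th ^^ n) z)) = w ((Th ^^ n) z) - f ((Th ^^ n) z)" for n z
    using that
  proof (induction n arbitrary: z)
    case 0 then show ?case by simp
  next
    case (Suc n)
    have h1: "\<forall>m. w (Th ((Th ^^ m) (Th z))) = w ((Th ^^ m) (Th z)) - f ((Th ^^ m) (Th z))"
    proof
      fix m show "w (Th ((Th ^^ m) (Th z))) = w ((Th ^^ m) (Th z)) - f ((Th ^^ m) (Th z))"
        using Suc.prems[rule_format, of "Suc m"] by (simp add: funpow_Suc_right del: funpow.simps)
    qed
    have "w ((Th ^^ Suc n) z) = w ((Th ^^ n) (Th z))" by (simp add: funpow_Suc_right del: funpow.simps)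
    also have "\<dots> = w (Th z) - S n (Th z)" by (rule Suc.IH[OF h1])
    also have "w (Th z) = w z - f z" using Suc.prems[rule_format, of 0] by simp
    finally show ?case by (simp add: S_Suc)
  qed
  define B where "B C = {z \<in> space Q. w z \<le> C}" for C :: real
  have B_sets: "B C \<in> sets Q" for C
    unfolding B_def using w_meas by (simp add: measurable_cong_sets[OF sets_Q refl])
  have B_null: "measure Q (B C) = 0" for C
  proof -
    have m_n: "(\<integral>z. (indicator (B C) ((Th ^^ n) z) :: real) \<partial>Q) = measure Q (B C)" for n
    proof -
      have mm: "(Th ^^ n) \<in> Q \<rightarrow>\<^sub>M Q" by (rule funpow_measurable[OF Th_Q_meas])
      have "(\<integral>z. (indicator (B C) ((Th ^^ n) z) :: real) \<partial>Q) = (\<integral>z. indicator (B C) z \<partial>distr Q Q (Th ^^ n))"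
        by (subst integral_distr[OF mm]) (simp_all add: B_sets borel_measurable_indicator)
      also have "\<dots> = (\<integral>z. indicator (B C) z \<partial>Q)" by (simp add: Th_iter_distr)
      also have "\<dots> = measure Q (B C)" using B_sets[of C] by (simp add: Int_absorb2 sets.sets_into_space)
      finally show ?thesis .
    qed
    have "(\<lambda>n. \<integral>z. (indicator (B C) ((Th ^^ n) z) :: real) \<partial>Q) \<longlonglongrightarrow> (\<integral>z. 0 \<partial>Q)"
    proof (rule integral_dominated_convergence[where w="\<lambda>_. 1"])
      show "(\<lambda>z. 0::real) \<in> borel_measurable Q" by simp
      show "(\<lambda>z. indicator (B C) ((Th ^^ n) z) :: real) \<in> borel_measurable Q" for n
        using funpow_measurable[OF Th_Q_meas, of n] B_sets[of C] by measurable
      show "integrable Q (\<lambda>_. 1::real)" by simp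
      show "AE z in Q. norm (indicator (B C) ((Th ^^ n) z) :: real) \<le> 1" for n
        by (simp add: indicator_def)
      show "AE z in Q. (\<lambda>n. indicator (B C) ((Th ^^ n) z) :: real) \<longlonglongrightarrow> 0"
        using ae3
      proof eventually_elim
        case (elim z)
        have Lz: "Lsup z = -\<infinity>" using elim[rule_format, of 0] by simp
        have "(\<lambda>n. ereal (S n z)) \<longlonglongrightarrow> -\<infinity>"
          using Lz unfolding Lsup_def by (simp add: limsup_MInfty)
        then obtain N where N: "\<And>n. n \<ge> N \<Longrightarrow> ereal (S n z) \<le> ereal (w z - C - 1)"
          unfolding Lim_MInfty by blast
        have "\<forall>n\<ge>N. (indicator (B C) ((Th ^^ n) z) :: real) = 0"
        proof (intro allI impI)
          fix n assume "n \<ge> N"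
          then have "S n z \<le> w z - C - 1" using N by simp
          then have "w ((Th ^^ n) z) > C" using iter[of z n] elim by simp
          then show "(indicator (B C) ((Th ^^ n) z) :: real) = 0" by (simp add: B_def)
        qed
        then show ?case by (intro tendsto_eventually) (auto simp: eventually_sequentially)
      qed
    qed
    then have "(\<lambda>n. measure Q (B C)) \<longlonglongrightarrow> 0" using m_n by simp
    then show ?thesis by (simp add: LIMSEQ_const_iff)
  qed
  have "(\<Union>C::nat. B (real C)) = space Q"
  proof
    show "space Q \<subseteq> (\<Union>C::nat. B (real C))"
    proof
      fix z assume z: "z \<in> space Q"
      obtain C :: nat where "w z \<le> real C" using real_arch_simple by blast
      then show "z \<in> (\<Union>C::nat. B (real C))" using z by (auto simp: B_def)
    qed
  qed (auto simp: B_def)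
  moreover have "(\<Union>C::nat. B (real C)) \<in> null_sets Q"
    using B_null B_sets by (intro null_sets_UN) (simp add: QP.emeasure_eq_measure null_sets_def)
  ultimately have "space Q \<in> null_sets Q" by simp
  then show False using QP.emeasure_space_1 by (simp add: null_sets_def)
qed

end


lemma cos_ne_1:
  fixes D \<delta> :: real
  assumes "D \<noteq> 0" "\<delta> > 0"
  shows "\<exists>q::rat. 0 < real_of_rat q \<and> real_of_rat q < \<delta> \<and> cos (real_of_rat q * D) \<noteq> 1"
proof -
  define m where "m = min \<delta> (pi / \<bar>D\<bar>)"
  have m: "0 < m" using assms by (simp add: m_def)
  obtain r where r: "r \<in> \<rat>" "0 < r" "r < m" using Rats_dense_in_real[OF m] by blast
  from r(1) obtain q where q: "r = real_of_rat q" by (rule Rats_cases)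
  have "r * \<bar>D\<bar> < pi"
    using r assms by (simp add: m_def pos_less_divide_eq)
  moreover have "0 < r * \<bar>D\<bar>" using r assms by simp
  ultimately have "cos (r * \<bar>D\<bar>) < cos 0"
    by (intro cos_monotone_0_pi) auto
  moreover have "cos (r * D) = cos (r * \<bar>D\<bar>)"
  proof -
    have "\<bar>r * D\<bar> = r * \<bar>D\<bar>" using r(2) by (simp add: abs_mult)
    then show ?thesis by (metis cos_abs_real)
  qed
  ultimately have "cos (r * D) \<noteq> 1" by simp
  then show ?thesis using r q unfolding m_def by (intro exI[of _ q]) simp
qed

lemma measurable_cis[measurable (raw)]:
  "f \<in> borel_measurable M \<Longrightarrow> (\<lambda>x. cis (f x)) \<in> borel_measurable M"
  unfolding cis_conv_exp by measurable

lemma measurable_cnj[measurable (raw)]: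
  "f \<in> borel_measurable M \<Longrightarrow> (\<lambda>x. cnj (f x)) \<in> borel_measurable M"
  by (erule measurable_compose[OF _ borel_measurable_continuous_onI]) (auto intro!: continuous_intros)

lemma lattice_const:
  fixes P :: "'x measure" and g :: "'x \<Rightarrow> real" and \<delta> :: real
  assumes P: "prob_space P" and g[measurable]: "g \<in> borel_measurable P" and \<delta>: "\<delta> > 0"
    and one: "\<And>q::rat. 0 < real_of_rat q \<Longrightarrow> real_of_rat q < \<delta> \<Longrightarrow>
        cmod (CLINT y|P. cis (real_of_rat q * g y)) = 1"
  shows "\<exists>c. AE y in P. g y = c"
proof -
  interpret P: prob_space P by fact
  interpret PP: pair_prob_space P P by (simp add: pair_prob_space_def pair_sigma_finite_def P
        prob_space_imp_sigma_finite)
  have int1: "integrable P (\<lambda>y. cis (t * g y))" for t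
    by (rule P.integrable_const_bound[where B=1]) auto
  have cos1: "AE z in P \<Otimes>\<^sub>M P. cos (t * (g (fst z) - g (snd z))) = 1"
    if t1: "cmod (CLINT y|P. cis (t * g y)) = 1" for t
  proof -
    define \<psi> where "\<psi> = (CLINT y|P. cis (t * g y))"
    have intp: "integrable (P \<Otimes>\<^sub>M P) (\<lambda>z. cis (t * g (fst z)) * cnj (cis (t * g (snd z))))"
      by (rule PP.P.integrable_const_bound[where B=1]) (auto simp: norm_mult)
    have "\<psi> * cnj \<psi> = 1"
      using t1 complex_norm_square[of \<psi>] unfolding \<psi>_def by simp
    moreover have "\<psi> * cnj \<psi> = (CLINT z|P \<Otimes>\<^sub>M P. cis (t * g (fst z)) * cnj (cis (t * g (snd z))))"
    proof -
      have "(CLINT z|P \<Otimes>\<^sub>M P. cis (t * g (fst z)) * cnj (cis (t * g (snd z)))) =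
          (CLINT y|P. CLINT y'|P. cis (t * g y) * cnj (cis (t * g y')))"
        using PP.integral_fst'[OF intp] by simp
      also have "\<dots> = (CLINT y|P. cis (t * g y) * cnj \<psi>)"
        unfolding \<psi>_def by simp
      also have "\<dots> = \<psi> * cnj \<psi>" unfolding \<psi>_def by simp
      finally show ?thesis ..
    qed
    ultimately have "1 = Re (CLINT z|P \<Otimes>\<^sub>M P. cis (t * g (fst z)) * cnj (cis (t * g (snd z))))"
      by simp
    also have "\<dots> = (\<integral>z. cos (t * (g (fst z) - g (snd z))) \<partial>(P \<Otimes>\<^sub>M P))"
    proof -
      have "Re (CLINT z|P \<Otimes>\<^sub>M P. cis (t * g (fst z)) * cnj (cis (t * g (snd z)))) =
          (\<integral>z. Re (cis (t * g (fst z)) * cnj (cis (t * g (snd z)))) \<partial>(P \<Otimes>\<^sub>M P))"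
        by (rule integral_Re[symmetric]) (rule intp)
      also have "\<dots> = (\<integral>z. cos (t * (g (fst z) - g (snd z))) \<partial>(P \<Otimes>\<^sub>M P))"
        by (simp add: cis_cnj cis_mult right_diff_distrib del: integral_Re)
      finally show ?thesis .
    qed
    finally have i1: "(\<integral>z. cos (t * (g (fst z) - g (snd z))) \<partial>(P \<Otimes>\<^sub>M P)) = 1" ..
    have intc: "integrable (P \<Otimes>\<^sub>M P) (\<lambda>z. cos (t * (g (fst z) - g (snd z))))"
      by (rule PP.P.integrable_const_bound[where B=1]) auto
    have int2: "integrable (P \<Otimes>\<^sub>M P) (\<lambda>z. 1 - cos (t * (g (fst z) - g (snd z))))"
      using intc by simp
    have "(\<integral>z. 1 - cos (t * (g (fst z) - g (snd z))) \<partial>(P \<Otimes>\<^sub>M P)) = 0"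
      using i1 intc by (simp add: PP.P.prob_space)
    then have "AE z in P \<Otimes>\<^sub>M P. 1 - cos (t * (g (fst z) - g (snd z))) = 0"
      using integral_nonneg_eq_0_iff_AE[OF int2] by simp
    then show ?thesis by (auto elim: eventually_mono)
  qed
  have "AE z in P \<Otimes>\<^sub>M P. \<forall>q::rat. 0 < real_of_rat q \<and> real_of_rat q < \<delta> \<longrightarrow>
      cos (real_of_rat q * (g (fst z) - g (snd z))) = 1"
  proof (subst AE_all_countable, intro allI)
    fix q :: rat
    show "AE z in P \<Otimes>\<^sub>M P. 0 < real_of_rat q \<and> real_of_rat q < \<delta> \<longrightarrow>
      cos (real_of_rat q * (g (fst z) - g (snd z))) = 1"
    proof (cases "0 < real_of_rat q \<and> real_of_rat q < \<delta>")
      case True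
      then show ?thesis using cos1[OF one] by (auto elim: eventually_mono)
    next
      case False then show ?thesis by (intro AE_I2) blast
    qed
  qed
  then have "AE z in P \<Otimes>\<^sub>M P. g (fst z) = g (snd z)"
  proof (rule eventually_mono)
    fix z assume H: "\<forall>q::rat. 0 < real_of_rat q \<and> real_of_rat q < \<delta> \<longrightarrow>
      cos (real_of_rat q * (g (fst z) - g (snd z))) = 1"
    show "g (fst z) = g (snd z)"
    proof (rule ccontr)
      assume "g (fst z) \<noteq> g (snd z)"
      then have "g (fst z) - g (snd z) \<noteq> 0" by simp
      from cos_ne_1[OF this \<delta>] H show False by blast
    qed
  qed
  then have "AE y in P. AE y' in P. g (fst (y, y')) = g (snd (y, y'))"
    by (rule PP.AE_pair)
  then have "AE y in P. AE y' in P. g y' = g y" by (simp add: eq_commute)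
  show ?thesis
  proof (rule ccontr)
    assume nc: "\<nexists>c. AE y in P. g y = c"
    have "AE y in P. False"
      using \<open>AE y in P. AE y' in P. g y' = g y\<close>
    proof (rule eventually_mono)
      fix y assume "AE y' in P. g y' = g y"
      then show False using nc by blast
    qed
    then show False by simp
  qed
qed


lemma cis_int_le1:
  assumes "prob_space P"
  shows "cmod (CLINT y|P. cis (g y)) \<le> 1"
proof -
  interpret prob_space P by fact
  have "cmod (CLINT y|P. cis (g y)) \<le> (\<integral>y. cmod (cis (g y)) \<partial>P)"
    by (rule integral_norm_bound)
  also have "\<dots> = 1" by (simp add: prob_space)
  finally show ?thesis .
qed

context setting_h begin

definition "Lr z = real_of_ereal (Lsup z)"

lemma Lr_meas[measurable]: "Lr \<in> borel_measurable (M \<Otimes>\<^sub>M \<Omega>)"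
  unfolding Lr_def by measurable

definition "\<phi>c x t = (CLINT \<omega>|Qx x. cis (t * Lr (x, \<omega>)))"
definition "\<psi>c x t = (CLINT y|K x. cis (t * h (x, y)))"

lemma Qx_split:
  assumes x: "x \<in> space M"
  shows "distr (K x \<Otimes>\<^sub>M Qx (T x)) (Qx x) (\<lambda>(s, \<omega>). case_nat s \<omega>) = Qx x"
    and "(\<lambda>(s, \<omega>). case_nat s \<omega>) \<in> (K x \<Otimes>\<^sub>M Qx (T x)) \<rightarrow>\<^sub>M Qx x"
proof -
  have kp: "prob_space (K ((T ^^ i) x))" for i by (rule kernel_in[OF K_kernel T_iter_space[OF x]])
  have e: "PiM UNIV (\<lambda>n. K ((T ^^ Suc n) x)) = Qx (T x)"
    unfolding fibre_measure_def by (simp add: funpow_Suc_right del: funpow.simps)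
  show "distr (K x \<Otimes>\<^sub>M Qx (T x)) (Qx x) (\<lambda>(s, \<omega>). case_nat s \<omega>) = Qx x"
    using PiM_split_Suc[of "\<lambda>i. K ((T ^^ i) x)", OF kp] unfolding e
    by (simp add: fibre_measure_def)
  show "(\<lambda>(s, \<omega>). case_nat s \<omega>) \<in> (K x \<Otimes>\<^sub>M Qx (T x)) \<rightarrow>\<^sub>M Qx x"
    using case_nat_measurable[of "\<lambda>i. K ((T ^^ i) x)"] unfolding e
    by (simp add: fibre_measure_def)
qed

lemma phi_split:
  assumes x: "x \<in> space M" and good: "AE \<omega> in Qx x. \<bar>Lsup (x, \<omega>)\<bar> \<noteq> \<infinity>"
  shows "\<phi>c x t = \<psi>c x t * \<phi>c (T x) t"
proof -
  have Tx: "T x \<in> space M" using measurable_space[OF T_meas x] .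
  interpret Kx: prob_space "K x" by (rule kernel_in[OF K_kernel x])
  interpret QT: prob_space "Qx (T x)" by (rule Qx_prob[OF Tx])
  interpret KQ: pair_prob_space "K x" "Qx (T x)"
    by (simp add: pair_prob_space_def pair_sigma_finite_def Kx.prob_space_axioms QT.prob_space_axioms
        prob_space_imp_sigma_finite)
  have sK: "sets (K x) = sets N" by (rule kernel_in[OF K_kernel x])
  have sQT: "sets (Qx (T x)) = sets \<Omega>" by (rule Qx_sets[OF Tx])
  have sQ: "sets (Qx x) = sets \<Omega>" by (rule Qx_sets[OF x])
  define G where "G \<omega> = cis (t * f (x, \<omega>)) * cis (t * Lr (Th (x, \<omega>)))" for \<omega>
  have G_meas: "G \<in> borel_measurable (Qx x)"
    unfolding G_def using Pair_meas[OF x] by measurable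
  have "\<phi>c x t = (CLINT \<omega>|Qx x. G \<omega>)"
    unfolding \<phi>c_def
  proof (rule integral_cong_AE)
    show "(\<lambda>\<omega>. cis (t * Lr (x, \<omega>))) \<in> borel_measurable (Qx x)"
      using Pair_meas[OF x] by measurable
    show "G \<in> borel_measurable (Qx x)" by (rule G_meas)
    show "AE \<omega> in Qx x. cis (t * Lr (x, \<omega>)) = G \<omega>"
      using good
    proof eventually_elim
      case (elim \<omega>)
      have "Lsup (x, \<omega>) = ereal (f (x, \<omega>)) + Lsup (Th (x, \<omega>))" by (rule Lsup_Th)
      then have "Lr (x, \<omega>) = f (x, \<omega>) + Lr (Th (x, \<omega>))"
        using elim unfolding Lr_def by (cases "Lsup (Th (x, \<omega>))") auto
      then show ?case unfolding G_def by (simp add: cis_mult distrib_left)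
    qed
  qed
  also have "\<dots> = (CLINT \<omega>|distr (K x \<Otimes>\<^sub>M Qx (T x)) (Qx x) (\<lambda>(s, \<omega>). case_nat s \<omega>). G \<omega>)"
    using Qx_split(1)[OF x] by simp
  also have "\<dots> = (CLINT z|K x \<Otimes>\<^sub>M Qx (T x). G (case_nat (fst z) (snd z)))"
    by (subst integral_distr[OF Qx_split(2)[OF x] G_meas]) (simp add: case_prod_beta')
  also have "\<dots> = (CLINT z|K x \<Otimes>\<^sub>M Qx (T x). cis (t * h (x, fst z)) * cis (t * Lr (T x, snd z)))"
    by (intro Bochner_Integration.integral_cong refl)
       (simp add: G_def f_def Th_simp)
  also have "\<dots> = (CLINT s|K x. CLINT \<omega>|Qx (T x). cis (t * h (x, s)) * cis (t * Lr (T x, \<omega>)))"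
  proof -
    have m: "(\<lambda>z. cis (t * h (x, fst z)) * cis (t * Lr (T x, snd z))) \<in> borel_measurable (N \<Otimes>\<^sub>M \<Omega>)"
      using x Tx by measurable
    have i: "integrable (K x \<Otimes>\<^sub>M Qx (T x)) (\<lambda>z. cis (t * h (x, fst z)) * cis (t * Lr (T x, snd z)))"
      by (rule KQ.P.integrable_const_bound[where B=1])
         (use m in \<open>simp_all add: norm_mult measurable_cong_sets[OF sets_pair_measure_cong[OF sK sQT] refl]\<close>)
    show ?thesis using KQ.integral_fst'[OF i] by simp
  qed
  also have "\<dots> = \<psi>c x t * \<phi>c (T x) t"
    unfolding \<psi>c_def \<phi>c_def by simp
  finally show ?thesis .
qed

end


context setting_h begin

lemma phi_meas[measurable]: "(\<lambda>x. \<phi>c x t) \<in> borel_measurable M"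
proof -
  have "(\<lambda>(x, \<omega>). cis (t * Lr (x, \<omega>))) \<in> borel_measurable (M \<Otimes>\<^sub>M \<Omega>)"
    by (simp add: case_prod_beta') measurable
  then show ?thesis unfolding \<phi>c_def by (rule integral_measurable_kernel2[OF _ Qx_sub])
qed

lemma phi_le1: "x \<in> space M \<Longrightarrow> cmod (\<phi>c x t) \<le> 1"
  unfolding \<phi>c_def by (rule cis_int_le1[OF Qx_prob])

lemma psi_le1: "x \<in> space M \<Longrightarrow> cmod (\<psi>c x t) \<le> 1"
  unfolding \<psi>c_def by (rule cis_int_le1[OF kernel_in(1)[OF K_kernel]])

lemma no_fin: "\<not> (AE z in Q. \<bar>Lsup z\<bar> \<noteq> \<infinity>)"
proof
  assume ae: "AE z in Q. \<bar>Lsup z\<bar> \<noteq> \<infinity>"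
  interpret Mp: prob_space M by (rule M_prob)
  have good: "AE x in M. AE \<omega> in Qx x. \<bar>Lsup (x, \<omega>)\<bar> \<noteq> \<infinity>"
    using ae by (subst (asm) AE_Q) measurable
  have ae_eq: "AE x in M. cmod (\<phi>c x t) = cmod (\<phi>c (T x) t)" for t
  proof -
    have le: "AE x in M. 0 \<le> cmod (\<phi>c (T x) t) - cmod (\<phi>c x t)"
      using good AE_space
    proof eventually_elim
      case (elim x)
      have "cmod (\<phi>c x t) = cmod (\<psi>c x t) * cmod (\<phi>c (T x) t)"
        using phi_split[OF elim(2) elim(1)] by (simp add: norm_mult)
      also have "\<dots> \<le> 1 * cmod (\<phi>c (T x) t)"
        by (intro mult_right_mono psi_le1 elim) simp
      finally show ?case by simp
    qed
    have int: "integrable M (\<lambda>x. cmod (\<phi>c (T x) t) - cmod (\<phi>c x t))"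
    proof (rule Mp.integrable_const_bound[where B=2])
      show "AE x in M. norm (cmod (\<phi>c (T x) t) - cmod (\<phi>c x t)) \<le> 2"
        using AE_space
      proof eventually_elim
        case (elim x)
        have "cmod (\<phi>c (T x) t) \<le> 1" by (rule phi_le1[OF measurable_space[OF T_meas elim]])
        moreover have "cmod (\<phi>c x t) \<le> 1" by (rule phi_le1[OF elim])
        ultimately show ?case by (smt (verit) norm_ge_zero real_norm_def)
      qed
    qed measurable
    have i1: "integrable M (\<lambda>x. cmod (\<phi>c x t))"
      by (rule Mp.integrable_const_bound[where B=1]) (auto intro: AE_I2 phi_le1)
    have "(\<integral>x. cmod (\<phi>c (T x) t) \<partial>M) = (\<integral>x. cmod (\<phi>c x t) \<partial>distr M M T)"
      by (rule integral_distr[symmetric]) measurable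
    also have "\<dots> = (\<integral>x. cmod (\<phi>c x t) \<partial>M)" using T_distr by simp
    finally have eqi: "(\<integral>x. cmod (\<phi>c (T x) t) \<partial>M) = (\<integral>x. cmod (\<phi>c x t) \<partial>M)" .
    have i2: "integrable M (\<lambda>x. cmod (\<phi>c (T x) t))"
      using Bochner_Integration.integrable_add[OF int i1] by simp
    have "(\<integral>x. cmod (\<phi>c (T x) t) - cmod (\<phi>c x t) \<partial>M) = 0"
      using eqi by (simp add: Bochner_Integration.integral_diff[OF i2 i1])
    then have "AE x in M. cmod (\<phi>c (T x) t) - cmod (\<phi>c x t) = 0"
      using integral_nonneg_eq_0_iff_AE[OF int le] by simp
    then show ?thesis by (auto elim: eventually_mono)
  qed
  have ae_all: "AE x in M. \<forall>q::rat. cmod (\<phi>c x (real_of_rat q)) = cmod (\<phi>c (T x) (real_of_rat q))"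
    using ae_eq by (subst AE_all_countable) blast
  have "AE x in M. False"
    using AE_space good ae_all nonconst
  proof eventually_elim
    case (elim x)
    note x = elim(1)
    have Tx: "T x \<in> space M" using measurable_space[OF T_meas x] .
    interpret Qxp: prob_space "Qx x" by (rule Qx_prob[OF x])
    have mL: "(\<lambda>\<omega>. Lr (x, \<omega>)) \<in> borel_measurable (Qx x)"
      using Pair_meas[OF x] by measurable
    define D where "D = distr (Qx x) borel (\<lambda>\<omega>. Lr (x, \<omega>))"
    interpret D: real_distribution D unfolding D_def by (rule Qxp.real_distribution_distr[OF mL])
    have char_eq: "char D t = \<phi>c x t" for t
      unfolding D_def char_def \<phi>c_def
      by (subst integral_distr[OF mL]) (simp_all add: cis_conv_exp)
    have "char D \<midarrow>0\<rightarrow> char D 0" using D.isCont_char[of 0] by (simp add: isCont_def)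
    then have "char D \<midarrow>0\<rightarrow> 1" by (simp add: D.char_zero)
    then obtain \<delta> where \<delta>: "\<delta> > 0" and near: "\<And>t. t \<noteq> 0 \<Longrightarrow> norm (t - 0) < \<delta> \<Longrightarrow> norm (char D t - 1) < 1/2"
      unfolding LIM_eq by (meson half_gt_zero zero_less_one)
    have one: "cmod (CLINT y|K x. cis (real_of_rat q * h (x, y))) = 1"
      if q: "0 < real_of_rat q" "real_of_rat q < \<delta>" for q
    proof -
      let ?t = "real_of_rat q"
      have "norm (char D ?t - 1) < 1/2" using q by (intro near) auto
      then have "norm (\<phi>c x ?t - 1) < 1/2" by (simp add: char_eq)
      moreover have "1 \<le> cmod (\<phi>c x ?t) + cmod (\<phi>c x ?t - 1)"
        using norm_triangle_ineq4[of "\<phi>c x ?t" "\<phi>c x ?t - 1"] by simp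
      ultimately have pos: "cmod (\<phi>c x ?t) > 0" by linarith
      have "cmod (\<phi>c x ?t) = cmod (\<psi>c x ?t) * cmod (\<phi>c (T x) ?t)"
        using phi_split[OF x elim(2)] by (simp add: norm_mult)
      also have "cmod (\<phi>c (T x) ?t) = cmod (\<phi>c x ?t)" using elim(3) by simp
      finally have "cmod (\<psi>c x ?t) = 1" using pos by simp
      then show ?thesis by (simp add: \<psi>c_def)
    qed
    have mh: "(\<lambda>y. h (x, y)) \<in> borel_measurable (K x)"
      using measurable_Pair2[OF h_meas x]
      by (simp add: measurable_cong_sets[OF kernel_in(2)[OF K_kernel x] refl])
    obtain c where "AE y in K x. h (x, y) = c"
      using lattice_const[OF kernel_in(1)[OF K_kernel x] mh \<delta> one] by blast
    then show False using elim(4) by blast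
  qed
  then show False using Mp.AE_const by simp
qed

lemma main_limsup: "AE z in Q. Lsup z = \<infinity>"
  using trichotomy no_minf no_fin by blast

end


theorem corollary1p7:
  fixes M :: "'a measure" and N :: "'b measure" and T :: "'a \<Rightarrow> 'a"
    and \<phi> :: "'a \<Rightarrow> 'b \<Rightarrow> 'b" and \<Theta> :: "('a \<times> 'b) measure"
    and K :: "'a \<Rightarrow> 'b measure" and h :: "'a \<times> 'b \<Rightarrow> real"
  assumes M_prob: "prob_space M"
    and T_mp: "preserves M T"
    and \<phi>_meas: "\<And>x. x \<in> space M \<Longrightarrow> \<phi> x \<in> N \<rightarrow>\<^sub>M N"
    and skew_meas: "(\<lambda>(x, y). (T x, \<phi> x y)) \<in> M \<Otimes>\<^sub>M N \<rightarrow>\<^sub>M M \<Otimes>\<^sub>M N"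
    and \<Theta>_prob: "prob_space \<Theta>"
    and \<Theta>_sets: "sets \<Theta> = sets (M \<Otimes>\<^sub>M N)"
    and \<Theta>_inv: "preserves \<Theta> (\<lambda>(x, y). (T x, \<phi> x y))"
    and \<Theta>_marg: "distr \<Theta> M fst = M"
    and K_kernel: "K \<in> M \<rightarrow>\<^sub>M prob_algebra N"
    and K_disint: "\<And>H :: 'a \<times> 'b \<Rightarrow> ennreal. H \<in> borel_measurable (M \<Otimes>\<^sub>M N) \<Longrightarrow>
        (\<integral>\<^sup>+ z. H z \<partial>\<Theta>) = (\<integral>\<^sup>+ x. (\<integral>\<^sup>+ y. H (x, y) \<partial>K x) \<partial>M)"
    and h_meas: "h \<in> borel_measurable (M \<Otimes>\<^sub>M N)"
    and nonconst: "AE x in M. \<not> (\<exists>c. AE y in K x. h (x, y) = c)"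
    and h_int: "integrable \<Theta> h"
    and h_mean: "(\<integral> z. h z \<partial>\<Theta>) = 0"
    and Q_erg: "ergodic (skew_measure M N T K) (shift_hat T)"
  shows "AE x in M. AE \<omega> in fibre_measure T K x.
           liminf (\<lambda>n. ereal (\<Sum>k<n. h ((T ^^ k) x, \<omega> k))) = -\<infinity> \<and>
           limsup (\<lambda>n. ereal (\<Sum>k<n. h ((T ^^ k) x, \<omega> k))) = \<infinity>"
proof -
  interpret S0: setting M N T K
    by (simp add: setting_def M_prob T_mp K_kernel Q_erg)
  interpret H1: setting_h M N T K \<Theta> h
    unfolding setting_h_def setting_h_axioms_def
    using S0.setting_axioms K_disint h_meas nonconst h_int h_mean by blast
  have nonconst2: "AE x in M. \<not> (\<exists>c. AE y in K x. - h (x, y) = c)"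
    using nonconst
  proof (rule eventually_mono)
    fix x assume nc: "\<not> (\<exists>c. AE y in K x. h (x, y) = c)"
    show "\<not> (\<exists>c. AE y in K x. - h (x, y) = c)"
    proof
      assume "\<exists>c. AE y in K x. - h (x, y) = c"
      then obtain c where "AE y in K x. - h (x, y) = c" by blast
      then have "AE y in K x. h (x, y) = - c" by (rule eventually_mono) simp
      then show False using nc by blast
    qed
  qed
  interpret H2: setting_h M N T K \<Theta> "\<lambda>z. - h z"
    unfolding setting_h_def setting_h_axioms_def
    using S0.setting_axioms K_disint h_meas nonconst2 h_int h_mean by simp
  have "AE z in S0.Q. H1.Lsup z = \<infinity> \<and> H2.Lsup z = \<infinity>"
    using H1.main_limsup H2.main_limsup by eventually_elim simp
  then have "AE x in M. AE \<omega> in fibre_measure T K x. H1.Lsup (x, \<omega>) = \<infinity> \<and> H2.Lsup (x, \<omega>) = \<infinity>"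
    by (subst (asm) S0.AE_Q) measurable
  then show ?thesis
  proof (rule eventually_mono)
    fix x assume "AE \<omega> in fibre_measure T K x. H1.Lsup (x, \<omega>) = \<infinity> \<and> H2.Lsup (x, \<omega>) = \<infinity>"
    then show "AE \<omega> in fibre_measure T K x.
           liminf (\<lambda>n. ereal (\<Sum>k<n. h ((T ^^ k) x, \<omega> k))) = -\<infinity> \<and>
           limsup (\<lambda>n. ereal (\<Sum>k<n. h ((T ^^ k) x, \<omega> k))) = \<infinity>"
    proof (rule eventually_mono)
      fix \<omega> assume a: "H1.Lsup (x, \<omega>) = \<infinity> \<and> H2.Lsup (x, \<omega>) = \<infinity>"
      let ?s = "\<lambda>n. ereal (\<Sum>k<n. h ((T ^^ k) x, \<omega> k))"
      have l1: "limsup ?s = \<infinity>" using a by (simp add: H1.Lsup_def H1.S_def)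
      have "H2.Lsup (x, \<omega>) = limsup (\<lambda>n. - ?s n)"
        unfolding H2.Lsup_def H2.S_def by (simp add: sum_negf)
      also have "\<dots> = - liminf ?s" by (rule ereal_Limsup_uminus)
      finally have "liminf ?s = -\<infinity>" using a by (metis ereal_uminus_uminus)
      then show "liminf ?s = -\<infinity> \<and> limsup ?s = \<infinity>" using l1 by simp
    qed
  qed
qed


end
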